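(* Let $K\subseteq L$ be real closed fields, and $C$ a positive Dedekind cut in $L$ which is not additive. Let $C'$ and $C'_{\mathrm{add}}$ be the cuts induced on $K$ by $C$ and $C_{\mathrm{add}}$ respectively, i.e. $C'=(C^-\cap K,C^+\cap K)$ and $C'_{\mathrm{add}}=((C_{\mathrm{add}})^-\cap K,(C_{\mathrm{add}})^+\cap K)$. Suppose that $C'_{\mathrm{add}}=(C')_{\mathrm{add}}$, and that $x,y\in L$ are two realizations of the cut $C'$ of $K$, with $x\in C^-$ and $y\in C^+$. Then $y-x$ induces the cut $C'_{\mathrm{add}}$ on $K$; that is, $(C'_{\mathrm{add}})^-=\{a\in K:a<y-x\}$ and $(C'_{\mathrm{add}})^+=\{a\in K: a\ge y-x\}$.
   Context: A cut of an ordered field $F$ is a pair $C=(C^-,C^+)$ with $F=C^-\cup C^+$ disjoint and $C^-<C^+$. It is a Dedekind cut if both sides are nonempty, $C^-$ has no maximum and $C^+$ has no minimum. It is positive if $C^-$ contains a positive element. It is additive if $C^-$ is closed under addition and contains some positive element. For a cut $C$ of $F$, $C_{\mathrm{add}}$ is the cut of $F$ with left side $\{r\in F: r+C^-\subseteq C^-\}$ (right side the complement). An element $a$ of an extension field realizes a cut $D$ of $K$ if $D^-=\{c\in K:c<a\}$ and $D^+=\{c\in K:c>a\}$. *)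

theory Defs
  imports "HOL-Computational_Algebra.Polynomial"
begin

definition subfield :: "'a::linordered_field set \<Rightarrow> bool" where
  "subfield K \<longleftrightarrow> 0 \<in> K \<and> 1 \<in> K \<and>
     (\<forall>a\<in>K. \<forall>b\<in>K. a + b \<in> K \<and> a - b \<in> K \<and> a * b \<in> K) \<and>
     (\<forall>a\<in>K. inverse a \<in> K)"

definition real_closed_in :: "'a::linordered_field set \<Rightarrow> bool" where
  "real_closed_in K \<longleftrightarrow> subfield K \<and>
     (\<forall>a\<in>K. a > 0 \<longrightarrow> (\<exists>b\<in>K. b * b = a)) \<and>
     (\<forall>p::'a poly. (\<forall>i. coeff p i \<in> K) \<and> odd (degree p) \<longrightarrow> (\<exists>r\<in>K. poly p r = 0))"

definition is_cut :: "'a::linordered_field set \<Rightarrow> 'a set \<times> 'a set \<Rightarrow> bool" where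
  "is_cut F C \<longleftrightarrow> fst C \<union> snd C = F \<and> fst C \<inter> snd C = {} \<and>
     (\<forall>a\<in>fst C. \<forall>b\<in>snd C. a < b)"

definition dedekind_cut :: "'a::linordered_field set \<Rightarrow> 'a set \<times> 'a set \<Rightarrow> bool" where
  "dedekind_cut F C \<longleftrightarrow> is_cut F C \<and> fst C \<noteq> {} \<and> snd C \<noteq> {} \<and>
     (\<forall>a\<in>fst C. \<exists>b\<in>fst C. a < b) \<and> (\<forall>a\<in>snd C. \<exists>b\<in>snd C. b < a)"

definition positive_cut :: "'a::linordered_field set \<times> 'a set \<Rightarrow> bool" where
  "positive_cut C \<longleftrightarrow> (\<exists>a\<in>fst C. a > 0)"

definition additive_cut :: "'a::linordered_field set \<times> 'a set \<Rightarrow> bool" where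
  "additive_cut C \<longleftrightarrow> (\<forall>a\<in>fst C. \<forall>b\<in>fst C. a + b \<in> fst C) \<and> (\<exists>a\<in>fst C. a > 0)"

definition cut_add :: "'a::linordered_field set \<Rightarrow> 'a set \<times> 'a set \<Rightarrow> 'a set \<times> 'a set" where
  "cut_add F C = ({r\<in>F. \<forall>c\<in>fst C. r + c \<in> fst C}, F - {r\<in>F. \<forall>c\<in>fst C. r + c \<in> fst C})"

definition restrict_cut :: "'a set \<Rightarrow> 'a set \<times> 'a set \<Rightarrow> 'a set \<times> 'a set" where
  "restrict_cut K C = (fst C \<inter> K, snd C \<inter> K)"

definition realizes :: "'a::linordered_field set \<Rightarrow> 'a \<Rightarrow> 'a set \<times> 'a set \<Rightarrow> bool" where
  "realizes K a D \<longleftrightarrow> fst D = {c\<in>K. c < a} \<and> snd D = {c\<in>K. c > a}"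

end

theory Submission
  imports Defs
begin

theorem lemma2p11:
  fixes K :: "'a::linordered_field set" and C :: "'a set \<times> 'a set" and x y :: 'a
  assumes "real_closed_in (UNIV :: 'a set)"
    and "real_closed_in K"
    and "dedekind_cut UNIV C"
    and "positive_cut C"
    and "\<not> additive_cut C"
    and "restrict_cut K (cut_add UNIV C) = cut_add K (restrict_cut K C)"
    and "realizes K x (restrict_cut K C)"
    and "realizes K y (restrict_cut K C)"
    and "x \<in> fst C" and "y \<in> snd C"
  shows "fst (restrict_cut K (cut_add UNIV C)) = {a\<in>K. a < y - x} \<and>
         snd (restrict_cut K (cut_add UNIV C)) = {a\<in>K. a \<ge> y - x}"
proof -
  have sf: "subfield K" using assms(2) unfolding real_closed_in_def by blast
  have add: "a + b \<in> K" if "a \<in> K" "b \<in> K" for a b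
    using sf that unfolding subfield_def by blast
  have cut: "is_cut UNIV C" using assms(3) unfolding dedekind_cut_def by blast
  have lt: "a < b" if "a \<in> fst C" "b \<in> snd C" for a b
    using cut that unfolding is_cut_def by blast
  have Dx: "fst C \<inter> K = {c\<in>K. c < x}" using assms(7) unfolding realizes_def restrict_cut_def by simp
  have Dy: "fst C \<inter> K = {c\<in>K. c < y}" using assms(8) unfolding realizes_def restrict_cut_def by simp
  have eq: "fst (restrict_cut K (cut_add UNIV C)) = {r\<in>K. \<forall>c\<in>fst C \<inter> K. r + c \<in> fst C \<inter> K}"
  proof -
    have "fst (restrict_cut K (cut_add UNIV C)) = fst (cut_add K (restrict_cut K C))"
      using assms(6) by simp
    also have "\<dots> = {r\<in>K. \<forall>c\<in>fst C \<inter> K. r + c \<in> fst C \<inter> K}"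
      by (simp add: cut_add_def restrict_cut_def)
    finally show ?thesis .
  qed
  have F: "fst (restrict_cut K (cut_add UNIV C)) = {a\<in>K. a < y - x}"
  proof (intro set_eqI iffI)
    fix a assume a: "a \<in> fst (restrict_cut K (cut_add UNIV C))"
    hence aK: "a \<in> K" and "\<forall>c\<in>fst C. a + c \<in> fst C"
      unfolding restrict_cut_def cut_add_def by auto
    hence "a + x \<in> fst C" using assms(9) by blast
    hence "a + x < y" using lt assms(10) by blast
    thus "a \<in> {a\<in>K. a < y - x}" using aK by (simp add: algebra_simps)
  next
    fix a assume "a \<in> {a\<in>K. a < y - x}"
    hence aK: "a \<in> K" and ay: "a < y - x" by auto
    have "\<forall>c\<in>fst C \<inter> K. a + c \<in> fst C \<inter> K"
    proof
      fix c assume c: "c \<in> fst C \<inter> K"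
      hence cK: "c \<in> K" and "c < x" using Dx by auto
      hence "a + c < y" using ay by (simp add: algebra_simps)
      moreover have "a + c \<in> K" using add aK cK by blast
      ultimately have "a + c \<in> fst C \<inter> K" using Dy by blast
      thus "a + c \<in> fst C \<inter> K" .
    qed
    thus "a \<in> fst (restrict_cut K (cut_add UNIV C))" using eq aK by blast
  qed
  have S: "snd (restrict_cut K (cut_add UNIV C)) = K - fst (restrict_cut K (cut_add UNIV C))"
    unfolding restrict_cut_def cut_add_def by auto
  show ?thesis using F S by auto
qed

end
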